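(* Let $r\in\mathbb Z_n$, $0\le j\le\frac{n-1}2$, and let $\mathbf w_0\neq0$ be a row vector with $\mathbf w_0Z=q^{2r}\mathbf w_0$. For $1\le k\le n-1$ let $\mathbf w_k=q^{kr}\mathcal L_k(q^j+q^{-j})\mathbf w_0=q^{kr}(q^{kj}+q^{-kj})\mathbf w_0$. Then the row vector $\mathbf w_{j,r}=[\mathbf w_{n-1}\ \mathbf w_{n-2}\ \cdots\ \mathbf w_1\ \mathbf w_0]$ satisfies $\mathbf w_{j,r}M=\lambda_{j,r}\mathbf w_{j,r}$, $\lambda_{j,r}=q^r(q^j+q^{-j})$. In particular (for $j=r=0$, $\mathbf w_0=[1\cdots1]$) a multiple of the dimension vector of the projective indecomposable $D_n$-modules is a left eigenvector of $M$ with eigenvalue $2$.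
   Context: $n\ge3$ odd, $q$ a primitive $n$-th root of unity in $\mathbb C$. $I$ is the $n\times n$ identity, $Z$ the $n\times n$ cyclic permutation matrix with $(Zu)_i=u_{i+1}$ (indices mod $n$). $M$ is the $n^2\times n^2$ block matrix of $n\times n$ blocks $M_{ab}$ ($0\le a,b\le n-1$) with $M_{a,a+1}=I$ ($0\le a\le n-2$), $M_{a,a-1}=Z$ ($1\le a\le n-2$), $M_{n-1,0}=2I$, $M_{n-1,n-2}=2Z$, other blocks zero (the McKay matrix of the $D_n$-module $V(2,0)$); row vectors of length $n^2$ are written as $n$ blocks of length $n$ matching this block structure. $\mathcal L_k(t)$: $\mathcal L_0=2$, $\mathcal L_1=t$, $\mathcal L_k=t\mathcal L_{k-1}-\mathcal L_{k-2}$; one has $\mathcal L_k(x+x^{-1})=x^k+x^{-k}$. The projective indecomposable modules $P(\ell,r)$ ($1\le\ell<n$) have dimension $2n$ and $V(n,r)$ has dimension $n$. *)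

theory Defs
  imports Complex_Main
begin

fun Lpoly :: "nat \<Rightarrow> complex \<Rightarrow> complex" where
  "Lpoly 0 t = 2"
| "Lpoly (Suc 0) t = t"
| "Lpoly (Suc (Suc k)) t = t * Lpoly (Suc k) t - Lpoly k t"

definition Zmat :: "nat \<Rightarrow> nat \<Rightarrow> nat \<Rightarrow> complex" where
  "Zmat n i c = (if c = Suc i mod n then 1 else 0)"

definition Mblock :: "nat \<Rightarrow> nat \<Rightarrow> nat \<Rightarrow> nat \<Rightarrow> nat \<Rightarrow> complex" where
  "Mblock n a b i c =
     (if a \<le> n - 2 \<and> b = a + 1 then (if i = c then 1 else 0)
      else if 1 \<le> a \<and> a \<le> n - 2 \<and> b + 1 = a then Zmat n i c
      else if a = n - 1 \<and> b = 0 then (if i = c then 2 else 0)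
      else if a = n - 1 \<and> b = n - 2 then 2 * Zmat n i c
      else 0)"

text \<open>The n^2 x n^2 matrix M; index x = a*n + i stands for position i in block a.\<close>
definition Mmat :: "nat \<Rightarrow> nat \<Rightarrow> nat \<Rightarrow> complex" where
  "Mmat n x y = Mblock n (x div n) (y div n) (x mod n) (y mod n)"

definition wvec :: "complex \<Rightarrow> nat \<Rightarrow> nat \<Rightarrow> (nat \<Rightarrow> complex) \<Rightarrow> nat \<Rightarrow> nat \<Rightarrow> complex" where
  "wvec q j r w0 k c =
     (if k = 0 then w0 c else q ^ (k * r) * Lpoly k (q ^ j + inverse q ^ j) * w0 c)"

text \<open>w_(j,r) = [w_(n-1) w_(n-2) ... w_1 w_0]: block a holds w_(n-1-a).\<close>
definition Wjr :: "nat \<Rightarrow> complex \<Rightarrow> nat \<Rightarrow> nat \<Rightarrow> (nat \<Rightarrow> complex) \<Rightarrow> nat \<Rightarrow> complex" where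
  "Wjr n q j r w0 x = wvec q j r w0 (n - 1 - x div n) (x mod n)"

end

theory Submission imports Defs begin
lemma sum_blocks: "(\<Sum>x<m*n. f x) = (\<Sum>a<m. \<Sum>i<n. f (a*n+i)::'a::comm_monoid_add)" for m n :: nat
proof (induction m)
  case 0 then show ?case by simp
next
  case (Suc m)
  have "{..<Suc m * n} = {..<m*n} \<union> {m*n..<m*n+n}" by auto
  then have "(\<Sum>x<Suc m*n. f x) = (\<Sum>x<m*n. f x) + (\<Sum>x\<in>{m*n..<m*n+n}. f x)"
    by (simp add: sum.union_disjoint ivl_disj_int)
  also have "(\<Sum>x\<in>{m*n..<m*n+n}. f x) = (\<Sum>i<n. f (m*n+i))"
    using sum.shift_bounds_nat_ivl[of f 0 "m*n" n] by (simp add: atLeast0LessThan add.commute)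
  finally show ?case using Suc by simp
qed

lemma rec_id: "(x::complex)*y = 1 \<Longrightarrow> (x+y)*(x*x^k + y*y^k) - (x^k+y^k) = x*(x*x^k) + y*(y*y^k)"
proof -
  assume h: "x*y=1"
  have "(x+y)*(x*x^k + y*y^k) = x*(x*x^k) + y*(y*y^k) + (x*y)*x^k + (x*y)*y^k"
    by (simp add: algebra_simps)
  then show ?thesis using h by simp
qed

lemma Lpoly_eq: "x*y = 1 \<Longrightarrow> Lpoly k (x + y) = x^k + y ^ k \<and> Lpoly (Suc k) (x + y) = x^Suc k + y ^ Suc k"
proof (induction k)
  case (Suc k)
  from rec_id[OF Suc.prems, of k] Suc show ?case by simp
qed auto

lemma rec_e: "(x::complex)*y = 1 \<Longrightarrow>
   Q^((m+2)*r)*(x^(m+2)+y^(m+2)) + Q^(2*r)*(Q^(m*r)*(x^m+y^m)) = Q^r*(x+y)*(Q^((m+1)*r)*(x^(m+1)+y^(m+1)))"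
proof -
  assume h: "x*y=1"
  have e1: "(m+2)*r = 2*r + m*r" by simp
  have p1: "Q^((m+2)*r) = Q^(2*r)*Q^(m*r)" using e1 by (metis power_add)
  have e: "r + (m+1)*r = 2*r + m*r" by simp
  have p2: "Q^r * Q^((m+1)*r) = Q^(2*r)*Q^(m*r)" using e by (metis power_add)
  have "(x+y)*(x^(m+1)+y^(m+1)) = x^(m+2)+y^(m+2) + (x*y)*x^m + (x*y)*y^m"
    by (simp add: algebra_simps power_Suc)
  then have p3: "(x+y)*(x^(m+1)+y^(m+1)) = x^(m+2)+y^(m+2) + (x^m + y^m)" using h by simp
  have "Q^r*(x+y)*(Q^((m+1)*r)*(x^(m+1)+y^(m+1))) = (Q^r * Q^((m+1)*r))*((x+y)*(x^(m+1)+y^(m+1)))"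
    by (simp add: algebra_simps)
  also have "\<dots> = Q^(2*r)*Q^(m*r) * (x^(m+2)+y^(m+2) + (x^m + y^m))" using p2 p3 by simp
  finally show ?thesis using p1 by (simp add: algebra_simps)
qed
lemma sum_delta_mul2: "(\<Sum>i<(n::nat). f i * (if i = t then v else 0)) = (if t < n then f t * (v::complex) else 0)"
proof -
  have "(\<Sum>i<n. f i * (if i=t then v else 0)) = (\<Sum>i<n. if i = t then f t * v else 0)" by (rule sum.cong) auto
  then show ?thesis by simp
qed

lemma sum_delta_mul: "(c::nat) < n \<Longrightarrow> (\<Sum>i<n. f i * (if i = c then v else 0)) = f c * (v::complex)"
proof -
  assume c: "c < n"
  have "(\<Sum>i<n. f i * (if i=c then v else 0)) = (\<Sum>i<n. if i = c then f c * v else 0)" by (rule sum.cong) auto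
  then show ?thesis using c by simp
qed

theorem mainTheorem16:
  fixes n j r :: nat and q :: complex and w0 :: "nat \<Rightarrow> complex"
  assumes "odd n" and "n \<ge> 3"
    and "q ^ n = 1" and "\<forall>k. 0 < k \<and> k < n \<longrightarrow> q ^ k \<noteq> 1"
    and "r < n" and "j \<le> (n - 1) div 2"
    and "\<exists>c<n. w0 c \<noteq> 0"
    and "\<forall>c<n. (\<Sum>i<n. w0 i * Zmat n i c) = q ^ (2 * r) * w0 c"
  shows "\<forall>y<n^2. (\<Sum>x<n^2. Wjr n q j r w0 x * Mmat n x y)
                 = q ^ r * (q ^ j + inverse q ^ j) * Wjr n q j r w0 y"
proof (intro allI impI)
  fix y0 assume y0: "y0 < n^2"
  have n3: "n \<ge> 3" by fact
  have qn: "q^n = 1" by fact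
  have Zc: "\<And>c. c < n \<Longrightarrow> (\<Sum>i<n. w0 i * Zmat n i c) = q ^ (2 * r) * w0 c" using assms(8) by blast
  have q0: "q \<noteq> 0" using qn n3 by (metis one_neq_zero power_0_left zero_less_iff_neq_zero zero_less_numeral order_less_le_trans)
  define x where "x = q^j"
  define y where "y = inverse q ^ j"
  have xy: "x*y = 1" unfolding x_def y_def using q0 by (simp add: power_mult_distrib[symmetric])
  define lam where "lam = q^r*(x+y)"
  define e where "e = (\<lambda>k. q^(k*r)*(x^k+y^k))"
  define coef where "coef = (\<lambda>k. if k = 0 then 1 else e k)"
  have wv: "\<And>k c. wvec q j r w0 k c = coef k * w0 c"
    unfolding wvec_def coef_def e_def using Lpoly_eq[OF xy] by (simp add: x_def y_def)
  define b where "b = y0 div n"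
  define c where "c = y0 mod n"
  have nn: "n^2 = n*n" by (simp add: power2_eq_square)
  have bn: "b < n" unfolding b_def using y0 nn by (simp add: less_mult_imp_div_less)
  have cn: "c < n" unfolding c_def using n3 by simp
  have y0e: "y0 = b*n + c" unfolding b_def c_def by simp
  define g where "g = (\<lambda>a. if a \<le> n - 2 \<and> b = a + 1 then 1
      else if 1 \<le> a \<and> a \<le> n - 2 \<and> b + 1 = a then q^(2*r)
      else if a = n - 1 \<and> b = 0 then 2
      else if a = n - 1 \<and> b = n - 2 then 2 * q^(2*r) else (0::complex))"
  have S1: "(\<Sum>i<n. w0 i * (if i = c then 1 else 0)) = w0 c" using sum_delta_mul[OF cn, of w0 1] by simp
  have S2: "(\<Sum>i<n. w0 i * (if i = c then 2 else 0)) = 2 * w0 c" using sum_delta_mul[OF cn, of w0 2] by simp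
  have S3: "(\<Sum>i<n. w0 i * (2 * Zmat n i c)) = 2 * q^(2*r) * w0 c"
  proof -
    have "(\<Sum>i<n. w0 i * (2 * Zmat n i c)) = 2 * (\<Sum>i<n. w0 i * Zmat n i c)"
      by (simp add: sum_distrib_left mult.left_commute)
    then show ?thesis using Zc[OF cn] by simp
  qed
  have inner: "(\<Sum>i<n. w0 i * Mblock n a b i c) = g a * w0 c" for a
  proof (cases "a \<le> n - 2 \<and> b = a + 1")
    case T1: True
    then have "\<And>i. Mblock n a b i c = (if i = c then 1 else 0)" using n3 by (auto simp: Mblock_def)
    then show ?thesis using S1 T1 n3 by (auto simp: g_def)
  next
    case F1: False
    show ?thesis
    proof (cases "1 \<le> a \<and> a \<le> n - 2 \<and> b + 1 = a")
      case T2: True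
      then have "\<And>i. Mblock n a b i c = Zmat n i c" using F1 using n3 by (auto simp: Mblock_def)
      then show ?thesis using Zc[OF cn] T2 F1 n3 by (auto simp: g_def)
    next
      case F2: False
      show ?thesis
      proof (cases "a = n - 1 \<and> b = 0")
        case T3: True
        then have "\<And>i. Mblock n a b i c = (if i = c then 2 else 0)" using F1 F2 using n3 by (auto simp: Mblock_def)
        then show ?thesis using S2 T3 F1 F2 n3 by (auto simp: g_def)
      next
        case F3: False
        show ?thesis
        proof (cases "a = n - 1 \<and> b = n - 2")
          case T4: True
          then have "\<And>i. Mblock n a b i c = 2 * Zmat n i c" using F1 F2 F3 using n3 by (auto simp: Mblock_def)
          then show ?thesis using S3 T4 F1 F2 F3 n3 by (auto simp: g_def)
        next
          case F4: False
          then have "\<And>i. Mblock n a b i c = 0" using F1 F2 F3 using n3 by (auto simp: Mblock_def)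
          then show ?thesis using F4 F1 F2 F3 n3 by (auto simp: g_def)
        qed
      qed
    qed
  qed
  have "(\<Sum>x<n^2. Wjr n q j r w0 x * Mmat n x y0)
      = (\<Sum>a<n. \<Sum>i<n. Wjr n q j r w0 (a*n+i) * Mmat n (a*n+i) y0)"
    unfolding nn by (rule sum_blocks)
  also have "\<dots> = (\<Sum>a<n. \<Sum>i<n. coef (n-1-a) * (w0 i * Mblock n a b i c))"
    unfolding Wjr_def Mmat_def wv using y0e bn cn
    by (intro sum.cong refl) (simp add: b_def c_def)
  also have "\<dots> = (\<Sum>a<n. coef (n-1-a) * g a * w0 c)"
    by (simp add: sum_distrib_left[symmetric] inner mult.assoc)
  finally have L: "(\<Sum>x<n^2. Wjr n q j r w0 x * Mmat n x y0) = (\<Sum>a<n. coef (n-1-a) * g a * w0 c)" .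
  have R: "Wjr n q j r w0 y0 = coef (n-1-b) * w0 c"
    unfolding Wjr_def wv b_def c_def by simp
  show "(\<Sum>x<n^2. Wjr n q j r w0 x * Mmat n x y0) = q ^ r * (q ^ j + inverse q ^ j) * Wjr n q j r w0 y0"
  proof -
    define G1 where "G1 = (if 1 \<le> b then 1 else (0::complex))"
    define G2 where "G2 = (if b + 1 \<le> n - 2 then q^(2*r) else (0::complex))"
    define G3 where "G3 = (if b = 0 then 2 else if b = n - 2 then 2*q^(2*r) else (0::complex))"
    have gdec: "g a = (if a = b - 1 then G1 else 0) + (if a = b + 1 then G2 else 0) + (if a = n - 1 then G3 else 0)"
      if "a < n" for a
      using that n3 bn unfolding g_def G1_def G2_def G3_def by (auto; linarith)
    have "(\<Sum>a<n. coef (n-1-a) * g a * w0 c) = (\<Sum>a<n. coef (n-1-a) * ((if a = b - 1 then G1 else 0) + (if a = b + 1 then G2 else 0) + (if a = n - 1 then G3 else 0))) * w0 c"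
      by (simp add: sum_distrib_right gdec)
    also have "\<dots> = ((\<Sum>a<n. coef (n-1-a) * (if a = b - 1 then G1 else 0)) + (\<Sum>a<n. coef (n-1-a) * (if a = b + 1 then G2 else 0)) + (\<Sum>a<n. coef (n-1-a) * (if a = n - 1 then G3 else 0))) * w0 c"
      by (simp add: distrib_left sum.distrib)
    also have "\<dots> = (coef (n-1-(b-1)) * G1 + (if b + 1 < n then coef (n-1-(b+1)) * G2 else 0) + coef 0 * G3) * w0 c"
    proof -
      have "b - 1 < n" "n - 1 < n" using bn n3 by auto
      then show ?thesis unfolding sum_delta_mul2 by simp
    qed
    finally have L2: "(\<Sum>a<n. coef (n-1-a) * g a * w0 c) = (coef (n-1-(b-1)) * G1 + (if b + 1 < n then coef (n-1-(b+1)) * G2 else 0) + coef 0 * G3) * w0 c" .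
    have lamq: "q ^ r * (q ^ j + inverse q ^ j) = lam" unfolding lam_def x_def y_def ..
    have recd: "e (k+1) + q^(2*r) * e (k-1) = lam * e k" if "1 \<le> k" for k
    proof -
      define m where "m = k - 1"
      have m: "k = m + 1" using that unfolding m_def by simp
      show ?thesis using rec_e[OF xy, of q m r] unfolding m e_def lam_def by (simp add: add.commute)
    qed
    have en: "e n = 2"
    proof -
      have "q^(n*r) = 1" using qn by (simp add: power_mult)
      moreover have "x^n = 1" unfolding x_def using qn by (metis mult.commute power_mult power_one)
      moreover have "y^n = 1" unfolding y_def using qn by (metis mult.commute power_mult power_one power_inverse inverse_1)
      ultimately show ?thesis unfolding e_def by simp
    qed
    have e0: "e 0 = 2" unfolding e_def by simp
    have e1: "e 1 = lam" unfolding e_def lam_def by simp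
    have key: "coef (n-1-(b-1)) * G1 + (if b + 1 < n then coef (n-1-(b+1)) * G2 else 0) + coef 0 * G3 = lam * coef (n-1-b)"
    proof (cases "b = n - 1")
      case True
      have f: "b \<noteq> 0" "b \<noteq> n - 2" "\<not> b + 1 < n" "n-1-(b-1) = 1" "n-1-b = 0" "1 \<le> b" using True n3 by auto
      show ?thesis using f e1 unfolding coef_def G1_def G2_def G3_def by simp
    next
      case b1: False
      show ?thesis
      proof (cases "b = n - 2")
        case True
        have f: "n-1-(b-1) = 2" "n-1-b = 1" "b \<noteq> 0" "1 \<le> b" "b + 1 < n" "\<not> b + 1 \<le> n - 2" using True n3 by auto
        have e2: "e 2 = e (Suc (Suc 0))" by (simp add: numeral_2_eq_2)
        then show ?thesis using f True recd[of 1] e0 unfolding coef_def G1_def G2_def G3_def by (simp add: algebra_simps)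
      next
        case b2: False
        show ?thesis
        proof (cases "b = 0")
          case True
          have f: "n-1-(0+1) = (n-1) - 1" "n - 1 + 1 = n" "0 \<noteq> n - 2" "0 + 1 < n" "0 + 1 \<le> n - 2" "n - 1 - 1 \<noteq> 0" "1 \<le> n - 1" using n3 by auto
          then show ?thesis using True recd[of "n-1"] en unfolding coef_def G1_def G2_def G3_def by (simp add: algebra_simps)
        next
          case False
          define k where "k = n - 1 - b"
          have k: "2 \<le> k" "n-1-(b-1) = k+1" "n-1-(b+1) = k - 1" "b + 1 < n" "b + 1 \<le> n - 2" "n-1-b = k"
            using False b1 b2 bn n3 unfolding k_def by auto
          then show ?thesis using False b2 recd[of k] unfolding coef_def G1_def G2_def G3_def by (simp add: algebra_simps)
        qed
      qed
    qed
    show ?thesis unfolding L L2 R lamq key by simp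
  qed
qed
end
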